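(* Let $\theta$ be uniformly distributed on $[0,2\pi]$, let $k\in\{1,2,3\}$ and $W=e^{-i\theta\sigma_k}$. Let $A,C$ be arbitrary linear operators on $\mathbb{C}^2$ and let $B=D=\sigma_j$ for some $j\in\{0,1,2,3\}$. Then $$\mathbb{E}_\theta\,\text{Tr}[WAW^\dagger B]\,\text{Tr}[WCW^\dagger D]=\Big[\tfrac12+\tfrac{\delta_{j0}+\delta_{jk}}{2}\Big]\text{Tr}[AB]\,\text{Tr}[CD]+\Big[-\tfrac12+\tfrac{\delta_{j0}+\delta_{jk}}{2}\Big]\text{Tr}[AB\sigma_k]\,\text{Tr}[CD\sigma_k].$$
   Context: $\sigma_0=I$, $\sigma_1,\sigma_2,\sigma_3$ are the Pauli matrices $X,Y,Z$; $\delta$ is the Kronecker delta; $\mathbb{E}_\theta g=\frac1{2\pi}\int_0^{2\pi}g\,d\theta$. *)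

theory Defs
  imports "HOL-Analysis.Analysis"
begin

text \<open>2x2 complex matrices are represented as complex^2^2 (rows/cols indexed by type 2,
  whose elements are 1 and 2).\<close>

definition mat2 :: "complex \<Rightarrow> complex \<Rightarrow> complex \<Rightarrow> complex \<Rightarrow> complex^2^2" where
  "mat2 a b c d = (\<chi> i j. if i = 1 then (if j = 1 then a else b) else (if j = 1 then c else d))"

definition pauli :: "nat \<Rightarrow> complex^2^2" where
  "pauli j = (if j = 0 then mat2 1 0 0 1
              else if j = 1 then mat2 0 1 1 0
              else if j = 2 then mat2 0 (-\<i>) \<i> 0
              else mat2 1 0 0 (-1))"

definition cadj :: "complex^2^2 \<Rightarrow> complex^2^2" where
  "cadj M = (\<chi> i j. cnj (M $ j $ i))"

definition cscale :: "complex \<Rightarrow> complex^2^2 \<Rightarrow> complex^2^2" where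
  "cscale c M = (\<chi> i j. c * M $ i $ j)"

fun mat_pow :: "complex^2^2 \<Rightarrow> nat \<Rightarrow> complex^2^2" where
  "mat_pow M 0 = mat 1"
| "mat_pow M (Suc n) = M ** mat_pow M n"

definition mexp :: "complex^2^2 \<Rightarrow> complex^2^2" where
  "mexp M = (\<chi> i j. \<Sum>n. (mat_pow M n) $ i $ j / of_nat (fact n))"

definition avg_theta :: "(real \<Rightarrow> complex) \<Rightarrow> complex" where
  "avg_theta g = complex_of_real (1 / (2 * pi)) * integral {0..2*pi} g"

definition kdelta :: "nat \<Rightarrow> nat \<Rightarrow> complex" where
  "kdelta a b = (if a = b then 1 else 0)"

end

theory Submission
  imports Defs
begin

lemma int_cos: assumes "n \<noteq> 0"
  shows "((\<lambda>x. cos (real n * x)) has_integral 0) {0..2*pi}"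
proof -
  have "((\<lambda>x. cos (real n * x)) has_integral (sin (real n * (2*pi)) / n - sin (real n * 0) / n)) {0..2*pi}"
    apply (rule fundamental_theorem_of_calculus)
     apply simp
    apply (rule has_real_derivative_iff_has_vector_derivative[THEN iffD1])
    using assms by (auto intro!: derivative_eq_intros)
  moreover have "sin (real n * (2*pi)) = 0"
    by (metis mult.commute mult.left_commute sin_npi of_nat_numeral of_nat_mult)
  ultimately show ?thesis by simp
qed
lemma int_sin: assumes "n \<noteq> 0"
  shows "((\<lambda>x. sin (real n * x)) has_integral 0) {0..2*pi}"
proof -
  have "((\<lambda>x. sin (real n * x)) has_integral ((- cos (real n * (2*pi)) / n) - (- cos (real n * 0) / n))) {0..2*pi}"
    apply (rule fundamental_theorem_of_calculus)
     apply simp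
    apply (rule has_real_derivative_iff_has_vector_derivative[THEN iffD1])
    using assms by (auto intro!: derivative_eq_intros)
  moreover have "cos (real n * (2*pi)) = 1"
    by (metis cos_int_2pin of_int_of_nat_eq mult.commute)
  ultimately show ?thesis by simp
qed

lemma cint_cos: assumes "n \<noteq> 0"
  shows "((\<lambda>x. K * complex_of_real (cos (real n * x))) has_integral 0) {0..2*pi}"
  using has_integral_mult_right[OF has_integral_of_real[OF int_cos[OF assms]], of K] by simp
lemma cint_sin: assumes "n \<noteq> 0"
  shows "((\<lambda>x. K * complex_of_real (sin (real n * x))) has_integral 0) {0..2*pi}"
  using has_integral_mult_right[OF has_integral_of_real[OF int_sin[OF assms]], of K] by simp
lemma cint2: "((\<lambda>x. K * complex_of_real (cos (2 * x))) has_integral 0) {0..2*pi}"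
  "((\<lambda>x. K * complex_of_real (sin (2 * x))) has_integral 0) {0..2*pi}"
  "((\<lambda>x. K * complex_of_real (cos (4 * x))) has_integral 0) {0..2*pi}"
  "((\<lambda>x. K * complex_of_real (sin (4 * x))) has_integral 0) {0..2*pi}"
  using cint_cos[of 2 K] cint_sin[of 2 K] cint_cos[of 4 K] cint_sin[of 4 K] by simp_all

lemma avg_lemma:
  fixes u y w u2 y2 w2 :: complex
  shows "integral {0..2*pi} (\<lambda>\<theta>. (u + y * complex_of_real (cos(2*\<theta>)) + w * complex_of_real (sin(2*\<theta>)))
      * (u2 + y2 * complex_of_real (cos(2*\<theta>)) + w2 * complex_of_real (sin(2*\<theta>))))
   = 2*pi * (u*u2 + (y*y2 + w*w2)/2)"
proof -
  have pw: "(u + y * complex_of_real (cos(2*\<theta>)) + w * complex_of_real (sin(2*\<theta>)))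
      * (u2 + y2 * complex_of_real (cos(2*\<theta>)) + w2 * complex_of_real (sin(2*\<theta>)))
    = (u*u2 + (y*y2 + w*w2)/2) + (u*y2+y*u2) * complex_of_real (cos (2 * \<theta>))
      + (u*w2+w*u2) * complex_of_real (sin (2 * \<theta>))
      + ((y*y2-w*w2)/2) * complex_of_real (cos (4 * \<theta>))
      + ((y*w2+w*y2)/2) * complex_of_real (sin (4 * \<theta>))" for \<theta>
  proof -
    define C where "C = complex_of_real (cos(2*\<theta>))"
    define S where "S = complex_of_real (sin(2*\<theta>))"
    have c4: "complex_of_real (cos (4 * \<theta>)) = 2 * C^2 - 1"
      using cos_double_cos[of "2*\<theta>"] unfolding C_def by (simp add: mult.assoc)
    have s4: "complex_of_real (sin (4 * \<theta>)) = 2 * S * C"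
      using sin_double[of "2*\<theta>"] unfolding C_def S_def by (simp add: mult.assoc)
    have sc: "S^2 = 1 - C^2"
      unfolding C_def S_def by (metis of_real_1 of_real_diff of_real_power sin_squared_eq)
    show ?thesis unfolding c4 s4 C_def[symmetric] S_def[symmetric]
      using sc by algebra
  qed
  have "((\<lambda>\<theta>. (u*u2 + (y*y2 + w*w2)/2) + (u*y2+y*u2) * complex_of_real (cos (2 * \<theta>))
      + (u*w2+w*u2) * complex_of_real (sin (2 * \<theta>))
      + ((y*y2-w*w2)/2) * complex_of_real (cos (4 * \<theta>))
      + ((y*w2+w*y2)/2) * complex_of_real (sin (4 * \<theta>))) has_integral
      ((2*pi - 0) *\<^sub>R (u*u2 + (y*y2 + w*w2)/2) + 0 + 0 + 0 + 0)) {0..2*pi}"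
    by (intro has_integral_add cint2) (use has_integral_const_real[of _ 0 "2*pi"] in auto)
  then show ?thesis unfolding pw by (simp add: integral_unique scaleR_conv_of_real)
qed


definition Wm :: "real \<Rightarrow> complex^2^2 \<Rightarrow> complex^2^2" where
  "Wm \<theta> P = (\<chi> i j. complex_of_real (cos \<theta>) * mat 1 $ i $ j - \<i> * complex_of_real (sin \<theta>) * P $ i $ j)"

lemma pauli_entries: "k \<in> {1,2,3} \<Longrightarrow> pauli k = (if k = 1 then mat2 0 1 1 0
              else if k = 2 then mat2 0 (-\<i>) \<i> 0 else mat2 1 0 0 (-1))"
  by (auto simp: pauli_def)

lemma tr_expand:
  assumes "k \<in> {1,2,3}"
  shows "trace (Wm \<theta> (pauli k) ** A ** cadj (Wm \<theta> (pauli k)) ** B)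
    = complex_of_real (cos \<theta>)^2 * trace (A ** B)
      + complex_of_real (cos \<theta>) * complex_of_real (sin \<theta>) * (\<i> * (trace (A ** pauli k ** B) - trace (pauli k ** A ** B)))
      + complex_of_real (sin \<theta>)^2 * trace (pauli k ** A ** pauli k ** B)"
  using assms
  by (auto simp: pauli_entries Wm_def cadj_def trace_def matrix_matrix_mult_def sum_2 mat2_def mat_def algebra_simps power2_eq_square)


lemma cscale_mult: "cscale a X ** cscale b Y = cscale (a*b) (X ** Y)"
  by (simp add: vec_eq_iff cscale_def matrix_matrix_mult_def sum_2 algebra_simps)

lemma pauli_sq: "pauli k ** pauli k = mat 1"
  by (simp add: pauli_def vec_eq_iff matrix_matrix_mult_def sum_2 mat2_def mat_def forall_2)

lemma mat_pow_cscale: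
  assumes "P ** P = mat 1"
  shows "mat_pow (cscale t P) n = cscale (t^n) (if even n then mat 1 else P)"
proof (induction n)
  case 0
  then show ?case by (simp add: vec_eq_iff cscale_def)
next
  case (Suc n)
  then show ?case using assms by (simp add: cscale_mult)
qed

lemma mexp_cscale:
  assumes "P ** P = mat 1"
  shows "mexp (cscale t P) = (\<chi> i j. (mat 1 $ i $ j + P $ i $ j)/2 * exp t + (mat 1 $ i $ j - P $ i $ j)/2 * exp (-t))"
proof -
  have "(\<lambda>n. (mat_pow (cscale t P) n) $ i $ j / of_nat (fact n)) sums
        ((mat 1 $ i $ j + P $ i $ j)/2 * exp t + (mat 1 $ i $ j - P $ i $ j)/2 * exp (-t))" for i j
  proof -
    have e: "(\<lambda>n. x^n / fact n) sums exp x" for x :: complex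
      using exp_converges[of x] by (simp add: scaleR_conv_of_real divide_inverse mult.commute)
    have "(\<lambda>n. (mat 1 $ i $ j + P $ i $ j)/2 * (t^n / fact n) + (mat 1 $ i $ j - P $ i $ j)/2 * ((-t)^n / fact n)) sums
        ((mat 1 $ i $ j + P $ i $ j)/2 * exp t + (mat 1 $ i $ j - P $ i $ j)/2 * exp (-t))"
      by (intro sums_add sums_mult e)
    moreover have "(mat 1 $ i $ j + P $ i $ j)/2 * (t^n / fact n) + (mat 1 $ i $ j - P $ i $ j)/2 * ((-t)^n / fact n)
       = (mat_pow (cscale t P) n) $ i $ j / of_nat (fact n)" for n
      unfolding mat_pow_cscale[OF assms] by (cases "even n") (auto simp: cscale_def field_simps)
    ultimately show ?thesis by simp
  qed
  then show ?thesis unfolding mexp_def by (simp add: sums_unique[symmetric] vec_eq_iff)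
qed

lemma mexp_W: "mexp (cscale (- \<i> * complex_of_real \<theta>) (pauli k)) = Wm \<theta> (pauli k)"
proof -
  have e1: "exp (- \<i> * complex_of_real \<theta>) = complex_of_real (cos \<theta>) - \<i> * complex_of_real (sin \<theta>)"
    by (simp add: exp_eq_polar complex_eq_iff)
  have e2: "exp (- (- \<i> * complex_of_real \<theta>)) = complex_of_real (cos \<theta>) + \<i> * complex_of_real (sin \<theta>)"
    by (simp add: exp_eq_polar complex_eq_iff)
  show ?thesis unfolding mexp_cscale[OF pauli_sq] e1 e2 Wm_def
    by (simp add: vec_eq_iff field_simps)
qed


lemma trig_conv:
  "complex_of_real (cos \<theta>)^2 * p1 + complex_of_real (cos \<theta>) * complex_of_real (sin \<theta>) * p2
   + complex_of_real (sin \<theta>)^2 * p3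
   = (p1+p3)/2 + (p1-p3)/2 * complex_of_real (cos (2*\<theta>)) + p2/2 * complex_of_real (sin (2*\<theta>))"
proof -
  have a: "complex_of_real (cos (2*\<theta>)) = 2 * complex_of_real (cos \<theta>)^2 - 1"
    by (simp add: cos_double_cos)
  have b: "complex_of_real (sin (2*\<theta>)) = 2 * complex_of_real (sin \<theta>) * complex_of_real (cos \<theta>)"
    by (simp add: sin_double)
  have c: "complex_of_real (sin \<theta>)^2 = 1 - complex_of_real (cos \<theta>)^2"
    by (metis of_real_1 of_real_diff of_real_power sin_squared_eq)
  show ?thesis unfolding a b c by (simp add: field_simps power2_eq_square)
qed

lemma final_alg:
  fixes A C :: "complex^2^2"
  assumes "k \<in> {1, 2, 3}" and "j \<in> {0, 1, 2, 3}"
  shows "(trace (A ** pauli j) + trace (pauli k ** A ** pauli k ** pauli j)) / 2 *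
         ((trace (C ** pauli j) + trace (pauli k ** C ** pauli k ** pauli j)) / 2) +
        ((trace (A ** pauli j) - trace (pauli k ** A ** pauli k ** pauli j)) / 2 *
         ((trace (C ** pauli j) - trace (pauli k ** C ** pauli k ** pauli j)) / 2) +
         \<i> * (trace (A ** pauli k ** pauli j) - trace (pauli k ** A ** pauli j)) / 2 *
         (\<i> * (trace (C ** pauli k ** pauli j) - trace (pauli k ** C ** pauli j)) / 2)) / 2
       = (1/2 + (kdelta j 0 + kdelta j k) / 2) * trace (A ** pauli j) * trace (C ** pauli j)
         + (-1/2 + (kdelta j 0 + kdelta j k) / 2)
             * trace (A ** pauli j ** pauli k) * trace (C ** pauli j ** pauli k)"
proof -
  have ii: "\<i>*\<i> = -1" by (simp add: complex_eq_iff)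
  from assms show ?thesis
    apply (simp only: insert_iff empty_iff simp_thms)
    apply (elim disjE)
    apply (insert ii)
    apply (simp_all add: pauli_def kdelta_def trace_def matrix_matrix_mult_def sum_2 mat2_def)
    apply (simp_all add: field_simps)
    done
qed

theorem lemma3:
  fixes A C :: "complex^2^2" and j k :: nat
  assumes "k \<in> {1, 2, 3}" and "j \<in> {0, 1, 2, 3}"
  shows "avg_theta (\<lambda>\<theta>. let W = mexp (cscale (- \<i> * complex_of_real \<theta>) (pauli k)) in
            trace (W ** A ** cadj W ** pauli j) * trace (W ** C ** cadj W ** pauli j))
       = (1/2 + (kdelta j 0 + kdelta j k) / 2) * trace (A ** pauli j) * trace (C ** pauli j)
         + (-1/2 + (kdelta j 0 + kdelta j k) / 2)
             * trace (A ** pauli j ** pauli k) * trace (C ** pauli j ** pauli k)"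
proof -
  have eq: "(\<lambda>\<theta>. let W = mexp (cscale (- \<i> * complex_of_real \<theta>) (pauli k)) in
            trace (W ** A ** cadj W ** pauli j) * trace (W ** C ** cadj W ** pauli j))
    = (\<lambda>\<theta>. ((trace (A ** pauli j) + trace (pauli k ** A ** pauli k ** pauli j)) / 2
          + (trace (A ** pauli j) - trace (pauli k ** A ** pauli k ** pauli j)) / 2 * complex_of_real (cos (2*\<theta>))
          + \<i> * (trace (A ** pauli k ** pauli j) - trace (pauli k ** A ** pauli j)) / 2 * complex_of_real (sin (2*\<theta>)))
        * ((trace (C ** pauli j) + trace (pauli k ** C ** pauli k ** pauli j)) / 2
          + (trace (C ** pauli j) - trace (pauli k ** C ** pauli k ** pauli j)) / 2 * complex_of_real (cos (2*\<theta>))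
          + \<i> * (trace (C ** pauli k ** pauli j) - trace (pauli k ** C ** pauli j)) / 2 * complex_of_real (sin (2*\<theta>))))"
    by (rule ext) (simp only: Let_def mexp_W tr_expand[OF assms(1)] trig_conv)
  show ?thesis
    unfolding avg_theta_def eq avg_lemma final_alg[OF assms, symmetric]
    by simp
qed

end
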